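(* Let $\beta>1$. For each $t_0>0$ there exists a constant $C_1>0$ such that $$C_1\beta^{-m(t,u)}\le|t-u|\le\beta^{-m(t,u)}$$ for all $t,u\in\mathcal U\cap[t_0,1]$.
   Context: Let $\gamma=\beta-1$ if $\beta$ is an integer and $\gamma=\lfloor\beta\rfloor$ otherwise. $T_\beta(x)=\beta x-\lfloor\beta x\rfloor$ on $[0,1)$. For $x\in(0,1]$ the quasi-greedy $\beta$-expansion is the lexicographically largest sequence in $\{0,\dots,\gamma\}^{\mathbb N}$, not eventually zero, with $x=\sum_i a_i\beta^{-i}$. For $t,u\in(0,1]$ with quasi-greedy expansions $(t_i),(u_i)$, $m(t,u)=\sup\{k\ge1\colon t_i=u_i\text{ for all }i\in\{1,\dots,k\}\}$ is the length of the longest common prefix (taken as $0$ if $t_1\ne u_1$). For $0<t<1$ let $K(t)=\{x\in[0,1)\colon T_\beta^k(x)\notin(0,t)\ \forall k\ge0\}$, $K(0)=[0,1)$, $K(1)=\{0\}$. A parameter $t\in[0,1]$ is a bifurcation parameter if $t\in\{0,1\}$, or $0<t<1$ and for every $\delta>0$ there is $t'\in(t-\delta,t+\delta)$ with $K(t')\ne K(t)$; $\mathcal U$ is the set of bifurcation parameters in $[0,1)$. *)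

theory Defs
  imports Complex_Main "HOL-Library.Extended_Nat"
begin

definition beta_gamma :: "real \<Rightarrow> nat" where
  "beta_gamma \<beta> = (if \<beta> \<in> \<int> then nat \<lfloor>\<beta>\<rfloor> - 1 else nat \<lfloor>\<beta>\<rfloor>)"

definition T_beta :: "real \<Rightarrow> real \<Rightarrow> real" where
  "T_beta \<beta> x = \<beta> * x - of_int \<lfloor>\<beta> * x\<rfloor>"

text \<open>Digit sequences are indexed from 0: a i is the paper's digit a_(i+1),
  so x = sum_i a_i beta^(-(i+1)).\<close>
definition is_beta_exp_nez :: "real \<Rightarrow> real \<Rightarrow> (nat \<Rightarrow> nat) \<Rightarrow> bool" where
  "is_beta_exp_nez \<beta> x a \<longleftrightarrow>
     (\<forall>i. a i \<le> beta_gamma \<beta>) \<and>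
     \<not> (\<exists>N. \<forall>i\<ge>N. a i = 0) \<and>
     (\<lambda>i. real (a i) / \<beta> ^ (i + 1)) sums x"

definition lex_less :: "(nat \<Rightarrow> nat) \<Rightarrow> (nat \<Rightarrow> nat) \<Rightarrow> bool" where
  "lex_less a b \<longleftrightarrow> (\<exists>n. (\<forall>j<n. a j = b j) \<and> a n < b n)"

definition quasi_greedy :: "real \<Rightarrow> real \<Rightarrow> (nat \<Rightarrow> nat)" where
  "quasi_greedy \<beta> x = (THE a. is_beta_exp_nez \<beta> x a \<and>
       (\<forall>b. is_beta_exp_nez \<beta> x b \<longrightarrow> b = a \<or> lex_less b a))"

definition m_prefix :: "real \<Rightarrow> real \<Rightarrow> real \<Rightarrow> enat" where
  "m_prefix \<beta> t u = Sup {enat k | k. k \<ge> 1 \<and>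
       (\<forall>j<k. quasi_greedy \<beta> t j = quasi_greedy \<beta> u j)}"

definition beta_pow_neg :: "real \<Rightarrow> enat \<Rightarrow> real" where
  "beta_pow_neg \<beta> m = (case m of enat k \<Rightarrow> 1 / \<beta> ^ k | \<infinity> \<Rightarrow> 0)"

definition K_set :: "real \<Rightarrow> real \<Rightarrow> real set" where
  "K_set \<beta> t =
     (if t = 0 then {0..<1}
      else if t = 1 then {0}
      else {x \<in> {0..<1}. \<forall>k. (T_beta \<beta> ^^ k) x \<notin> {0<..<t}})"

definition bifurcation :: "real \<Rightarrow> real \<Rightarrow> bool" where
  "bifurcation \<beta> t \<longleftrightarrow> t = 0 \<or> t = 1 \<or>
     (0 < t \<and> t < 1 \<and>
      (\<forall>\<delta>>0. \<exists>t'\<in>{0..1}. \<bar>t' - t\<bar> < \<delta> \<and> K_set \<beta> t' \<noteq> K_set \<beta> t))"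

definition U_set :: "real \<Rightarrow> real set" where
  "U_set \<beta> = {t \<in> {0..<1}. bifurcation \<beta> t}"

end

theory Submission
  imports Defs
begin

definition qS :: "real \<Rightarrow> real \<Rightarrow> real" where
  "qS \<beta> x = \<beta> * x - of_int \<lceil>\<beta> * x\<rceil> + 1"

definition qd :: "real \<Rightarrow> real \<Rightarrow> nat" where
  "qd \<beta> x = nat (\<lceil>\<beta> * x\<rceil> - 1)"

lemma qS_pos: "0 < qS \<beta> x" and qS_le1: "qS \<beta> x \<le> 1"
  using ceiling_correct[of "\<beta>*x"] unfolding qS_def by linarith+

lemma qS_iter_pos: "0 < x \<Longrightarrow> 0 < (qS \<beta> ^^ n) x"
  by (cases n) (auto simp: qS_pos)

lemma qS_iter_le1: "x \<le> 1 \<Longrightarrow> (qS \<beta> ^^ n) x \<le> 1"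
  by (cases n) (auto simp: qS_le1)

lemma qd_real: assumes "0 < \<beta>" "0 < x" shows "real (qd \<beta> x) = of_int \<lceil>\<beta> * x\<rceil> - 1"
proof -
  have "0 < \<beta> * x" using assms by simp
  then have "\<lceil>\<beta> * x\<rceil> \<ge> 1" by (simp add: ceiling_correct order.strict_implies_order zero_less_ceiling
      int_one_le_iff_zero_less)
  then show ?thesis unfolding qd_def by simp
qed

lemma qS_eq: assumes "0 < \<beta>" "0 < x" shows "qS \<beta> x = \<beta> * x - real (qd \<beta> x)"
  using qd_real[OF assms] unfolding qS_def by simp

lemma qS_Suc: assumes "0 < \<beta>" "0 < x"
  shows "(qS \<beta> ^^ Suc n) x = \<beta> * (qS \<beta> ^^ n) x - real (qd \<beta> ((qS \<beta> ^^ n) x))"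
  using qS_eq[OF assms(1) qS_iter_pos[OF assms(2)]] by simp

lemma value_id: assumes "0 < \<beta>" "0 < x"
  shows "x = (\<Sum>l<n. real (qd \<beta> ((qS \<beta> ^^ l) x)) / \<beta>^(l+1)) + (qS \<beta> ^^ n) x / \<beta>^n"
proof (induction n)
  case 0 then show ?case by simp
next
  case (Suc n)
  have "(qS \<beta> ^^ Suc n) x / \<beta>^(Suc n) = (qS \<beta> ^^ n) x / \<beta>^n - real (qd \<beta> ((qS \<beta> ^^ n) x)) / \<beta>^(n+1)"
    using qS_Suc[OF assms, of n] assms by (simp add: field_simps)
  then show ?case using Suc by simp
qed

lemma diff_id: assumes "0 < \<beta>" "0 < t" "0 < u"
  and "\<forall>l<i. qd \<beta> ((qS \<beta> ^^ l) u) = qd \<beta> ((qS \<beta> ^^ l) t)"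
  shows "(qS \<beta> ^^ i) u - (qS \<beta> ^^ i) t = \<beta>^i * (u - t)"
  using assms(4)
proof (induction i)
  case 0 then show ?case by simp
next
  case (Suc i)
  then have h: "(qS \<beta> ^^ i) u - (qS \<beta> ^^ i) t = \<beta>^i * (u - t)"
    and e: "qd \<beta> ((qS \<beta> ^^ i) u) = qd \<beta> ((qS \<beta> ^^ i) t)" by auto
  have "(qS \<beta> ^^ Suc i) u - (qS \<beta> ^^ Suc i) t = \<beta> * ((qS \<beta> ^^ i) u - (qS \<beta> ^^ i) t)"
    using qS_Suc[OF assms(1,2), of i] qS_Suc[OF assms(1,3), of i] e by (simp add: algebra_simps)
  then show ?case using h by simp
qed

lemma gamma_eq: assumes "1 < \<beta>" shows "int (beta_gamma \<beta>) = \<lceil>\<beta>\<rceil> - 1"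
proof (cases "\<beta> \<in> \<int>")
  case True
  then obtain m where m: "\<beta> = of_int m" by (auto elim: Ints_cases)
  then have "m \<ge> 2" using assms by simp
  then show ?thesis using True m unfolding beta_gamma_def by simp
next
  case False
  have "\<lceil>\<beta>\<rceil> = \<lfloor>\<beta>\<rfloor> + 1" using False
    by (metis Ints_of_int ceiling_altdef)
  moreover have "\<lfloor>\<beta>\<rfloor> \<ge> 1" using assms by simp
  ultimately show ?thesis using False unfolding beta_gamma_def by simp
qed

lemma qd_le_gamma: assumes "1 < \<beta>" "0 < x" "x \<le> 1" shows "qd \<beta> x \<le> beta_gamma \<beta>"
proof -
  have "\<beta> * x \<le> \<beta>" using assms by simp
  then have "\<lceil>\<beta> * x\<rceil> \<le> \<lceil>\<beta>\<rceil>" by (rule ceiling_mono)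
  then show ?thesis using gamma_eq[OF assms(1)] unfolding qd_def by linarith
qed


lemma lex_asym: "lex_less a b \<Longrightarrow> lex_less b a \<Longrightarrow> False"
  unfolding lex_less_def
  by (metis less_imp_not_less nat_neq_iff)

lemma qseq_exp: assumes "1 < \<beta>" "0 < x" "x \<le> 1"
  shows "is_beta_exp_nez \<beta> x (\<lambda>i. qd \<beta> ((qS \<beta> ^^ i) x))"
proof -
  have b0: "0 < \<beta>" using assms by simp
  let ?a = "\<lambda>i. qd \<beta> ((qS \<beta> ^^ i) x)"
  have dig: "\<forall>i. ?a i \<le> beta_gamma \<beta>"
    using qd_le_gamma[OF assms(1) qS_iter_pos[OF assms(2)] qS_iter_le1[OF assms(3)]] by blast
  have ne: "\<not> (\<exists>N. \<forall>i\<ge>N. ?a i = 0)"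
  proof
    assume "\<exists>N. \<forall>i\<ge>N. ?a i = 0"
    then obtain N where N: "\<forall>i\<ge>N. ?a i = 0" by blast
    have grow: "(qS \<beta> ^^ (N + i)) x = \<beta>^i * (qS \<beta> ^^ N) x" for i
    proof (induction i)
      case 0 then show ?case by simp
    next
      case (Suc i)
      have "(qS \<beta> ^^ Suc (N + i)) x = \<beta> * (qS \<beta> ^^ (N+i)) x"
        using qS_Suc[OF b0 assms(2), of "N+i"] N by simp
      then show ?case using Suc by simp
    qed
    have p: "0 < (qS \<beta> ^^ N) x" by (rule qS_iter_pos[OF assms(2)])
    obtain i where i: "1 / (qS \<beta> ^^ N) x < \<beta>^i" using real_arch_pow[OF assms(1)] by blast
    then have "1 < \<beta>^i * (qS \<beta> ^^ N) x" using p by (simp add: field_simps)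
    then have "1 < (qS \<beta> ^^ (N + i)) x" using grow by simp
    then show False using qS_iter_le1[OF assms(3)] by (metis not_le)
  qed
  have sm: "(\<lambda>i. real (?a i) / \<beta> ^ (i + 1)) sums x"
    unfolding sums_def
  proof -
    have eq: "(\<Sum>i<n. real (?a i) / \<beta> ^ (i + 1)) = x - (qS \<beta> ^^ n) x / \<beta>^n" for n
      using value_id[OF b0 assms(2), of n] by simp
    have "(\<lambda>n. (qS \<beta> ^^ n) x / \<beta>^n) \<longlonglongrightarrow> 0"
    proof (rule tendsto_sandwich[of "\<lambda>_. 0" _ _ "\<lambda>n. (1/\<beta>)^n"])
      show "\<forall>\<^sub>F n in sequentially. 0 \<le> (qS \<beta> ^^ n) x / \<beta> ^ n"
        using qS_iter_pos[OF assms(2)] b0 by (auto intro!: always_eventually less_imp_le)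
      show "\<forall>\<^sub>F n in sequentially. (qS \<beta> ^^ n) x / \<beta> ^ n \<le> (1 / \<beta>) ^ n"
        using qS_iter_le1[OF assms(3)] b0
        by (auto intro!: always_eventually divide_right_mono simp: power_divide)
      show "(\<lambda>_. 0::real) \<longlonglongrightarrow> 0" by simp
      show "(\<lambda>n. (1 / \<beta>) ^ n) \<longlonglongrightarrow> 0" using assms(1) by (intro LIMSEQ_realpow_zero) auto
    qed
    then have "(\<lambda>n. x - (qS \<beta> ^^ n) x / \<beta>^n) \<longlonglongrightarrow> x - 0" by (intro tendsto_intros)
    then show "(\<lambda>n. \<Sum>i<n. real (?a i) / \<beta> ^ (i + 1)) \<longlonglongrightarrow> x" using eq by simp
  qed
  show ?thesis unfolding is_beta_exp_nez_def using dig ne sm by blast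
qed

lemma qseq_max: assumes "1 < \<beta>" "0 < x" "x \<le> 1" and c: "is_beta_exp_nez \<beta> x c"
  shows "c = (\<lambda>i. qd \<beta> ((qS \<beta> ^^ i) x)) \<or> lex_less c (\<lambda>i. qd \<beta> ((qS \<beta> ^^ i) x))"
proof (rule ccontr)
  have b0: "0 < \<beta>" using assms by simp
  let ?a = "\<lambda>i. qd \<beta> ((qS \<beta> ^^ i) x)"
  assume H: "\<not> (c = ?a \<or> lex_less c ?a)"
  then have "\<exists>i. c i \<noteq> ?a i" by auto
  define n where "n = (LEAST i. c i \<noteq> ?a i)"
  have cn: "c n \<noteq> ?a n" unfolding n_def using \<open>\<exists>i. c i \<noteq> ?a i\<close> by (rule LeastI_ex)
  have below: "\<forall>j<n. c j = ?a j" unfolding n_def using not_less_Least by blast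
  have "\<not> c n < ?a n" using H below unfolding lex_less_def by blast
  then have gt: "?a n + 1 \<le> c n" using cn by simp
  have csum: "(\<lambda>i. real (c i) / \<beta> ^ (i + 1)) sums x"
    and cne: "\<not> (\<exists>N. \<forall>i\<ge>N. c i = 0)" using c unfolding is_beta_exp_nez_def by auto
  define g where "g = (\<lambda>i. real (c (i + Suc n)) / \<beta> ^ (i + Suc n + 1))"
  have gs: "g sums (x - (\<Sum>i<Suc n. real (c i) / \<beta> ^ (i + 1)))"
    using sums_split_initial_segment[OF csum, of "Suc n"] unfolding g_def by simp
  obtain i where i: "i \<ge> Suc n" "c i \<noteq> 0" using cne by blast
  have "0 < g (i - Suc n)" unfolding g_def using i b0 by simp
  then have gpos: "0 < suminf g"
    by (intro suminf_pos2[OF sums_summable[OF gs]]) (auto simp add: g_def b0 less_imp_le)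
  have pre: "(\<Sum>i<n. real (c i) / \<beta> ^ (i + 1)) = (\<Sum>i<n. real (?a i) / \<beta> ^ (i + 1))"
    using below by simp
  have R: "suminf g = (qS \<beta> ^^ n) x / \<beta>^n - real (c n) / \<beta>^(n+1)"
    using sums_unique[OF gs] pre value_id[OF b0 assms(2), of n] by simp
  have "(qS \<beta> ^^ Suc n) x = \<beta> * (qS \<beta> ^^ n) x - real (?a n)"
    by (rule qS_Suc[OF b0 assms(2)])
  then have "\<beta> * (qS \<beta> ^^ n) x \<le> real (?a n) + 1"
    using qS_iter_le1[OF assms(3), where \<beta>=\<beta> and n="Suc n"] by simp
  also have "\<dots> \<le> real (c n)" using gt by linarith
  finally have "\<beta> * (qS \<beta> ^^ n) x \<le> real (c n)" .
  then have "(qS \<beta> ^^ n) x / \<beta>^n \<le> real (c n) / \<beta>^(n+1)"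
    using b0 by (simp add: field_simps)
  then show False using gpos R by simp
qed

lemma qg_eq: assumes "1 < \<beta>" "0 < x" "x \<le> 1"
  shows "quasi_greedy \<beta> x = (\<lambda>i. qd \<beta> ((qS \<beta> ^^ i) x))"
  unfolding quasi_greedy_def
proof (rule the_equality)
  show "is_beta_exp_nez \<beta> x (\<lambda>i. qd \<beta> ((qS \<beta> ^^ i) x)) \<and>
    (\<forall>b. is_beta_exp_nez \<beta> x b \<longrightarrow> b = (\<lambda>i. qd \<beta> ((qS \<beta> ^^ i) x)) \<or> lex_less b (\<lambda>i. qd \<beta> ((qS \<beta> ^^ i) x)))"
    using qseq_exp[OF assms] qseq_max[OF assms] by blast
next
  fix a assume A: "is_beta_exp_nez \<beta> x a \<and> (\<forall>b. is_beta_exp_nez \<beta> x b \<longrightarrow> b = a \<or> lex_less b a)"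
  have 1: "a = (\<lambda>i. qd \<beta> ((qS \<beta> ^^ i) x)) \<or> lex_less a (\<lambda>i. qd \<beta> ((qS \<beta> ^^ i) x))"
    using qseq_max[OF assms] A by blast
  have 2: "(\<lambda>i. qd \<beta> ((qS \<beta> ^^ i) x)) = a \<or> lex_less (\<lambda>i. qd \<beta> ((qS \<beta> ^^ i) x)) a"
    using qseq_exp[OF assms] A by blast
  show "a = (\<lambda>i. qd \<beta> ((qS \<beta> ^^ i) x))" using 1 2 lex_asym by metis
qed


lemma m_prefix_eq_inf: "m_prefix \<beta> t t = \<infinity>"
proof -
  have "{enat k | k. k \<ge> 1 \<and> (\<forall>j<k. quasi_greedy \<beta> t j = quasi_greedy \<beta> t j)} = enat ` {1..}"
    by auto
  moreover have "infinite (enat ` {1::nat..})"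
    using finite_imageD[of enat "{1::nat..}"] infinite_Ici[of "1::nat"] by (auto simp: inj_on_def)
  ultimately show ?thesis unfolding m_prefix_def Sup_enat_def by auto
qed

lemma m_prefix_eq_fin:
  assumes "\<forall>j<k. A j = B j" "A k \<noteq> B k" "quasi_greedy \<beta> t = A" "quasi_greedy \<beta> u = B"
  shows "m_prefix \<beta> t u = enat k"
  unfolding m_prefix_def assms(3,4)
proof (rule antisym)
  show "Sup {enat k |k. 1 \<le> k \<and> (\<forall>j<k. A j = B j)} \<le> enat k"
  proof (rule Sup_least)
    fix x assume "x \<in> {enat k |k. 1 \<le> k \<and> (\<forall>j<k. A j = B j)}"
    then obtain j where "x = enat j" "\<forall>i<j. A i = B i" by auto
    then show "x \<le> enat k" using assms(2) by (metis enat_ord_simps(1) not_le)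
  qed
  show "enat k \<le> Sup {enat k |k. 1 \<le> k \<and> (\<forall>j<k. A j = B j)}"
  proof (cases "k = 0")
    case True then show ?thesis by (simp add: zero_enat_def[symmetric])
  next
    case False then show ?thesis using assms(1) by (intro Sup_upper) auto
  qed
qed

lemma T_approx:
  assumes "0 < \<beta>" "\<forall>i<n. \<beta> * (qS \<beta> ^^ i) v \<notin> \<int>"
  shows "\<forall>e>0. \<exists>\<delta>>0. \<forall>z. \<bar>z - v\<bar> < \<delta> \<longrightarrow> \<bar>(T_beta \<beta> ^^ n) z - (qS \<beta> ^^ n) v\<bar> < e"
  using assms(2)
proof (induction n)
  case 0 then show ?case by auto
next
  case (Suc n)
  define q where "q = (qS \<beta> ^^ n) v"
  have nz: "\<beta> * q \<notin> \<int>" using Suc.prems unfolding q_def by auto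
  define g where "g = min (\<beta> * q - of_int \<lfloor>\<beta> * q\<rfloor>) (of_int \<lfloor>\<beta> * q\<rfloor> + 1 - \<beta> * q)"
  have "\<beta> * q \<noteq> of_int \<lfloor>\<beta> * q\<rfloor>" using nz by (metis Ints_of_int)
  then have g0: "0 < g" unfolding g_def using of_int_floor_le[of "\<beta>*q"] floor_correct[of "\<beta>*q"] by linarith
  have ceil: "\<lceil>\<beta> * q\<rceil> = \<lfloor>\<beta> * q\<rfloor> + 1" using nz by (metis Ints_of_int ceiling_altdef)
  have loc: "\<bar>T_beta \<beta> r - qS \<beta> q\<bar> = \<beta> * \<bar>r - q\<bar>" if "\<bar>r - q\<bar> < g / \<beta>" for r
  proof -
    have "\<beta> * \<bar>r - q\<bar> < g" using that assms(1) by (simp add: field_simps)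
    moreover have "\<bar>\<beta> * r - \<beta> * q\<bar> = \<beta> * \<bar>r - q\<bar>"
      using assms(1) by (simp add: abs_mult right_diff_distrib[symmetric])
    ultimately have "\<bar>\<beta> * r - \<beta> * q\<bar> < g" by simp
    then have "\<lfloor>\<beta> * r\<rfloor> = \<lfloor>\<beta> * q\<rfloor>" unfolding g_def by (intro floor_unique) linarith+
    then have "T_beta \<beta> r - qS \<beta> q = \<beta> * (r - q)" unfolding T_beta_def qS_def ceil by (simp add: algebra_simps)
    then show ?thesis using assms(1) by (simp add: abs_mult)
  qed
  show ?case
  proof (intro allI impI)
    fix e :: real assume e: "0 < e"
    define e' where "e' = min (g / \<beta>) (e / \<beta>)"
    have e'0: "0 < e'" unfolding e'_def using g0 e assms(1) by simp
    from Suc.IH[rule_format, OF _ e'0] Suc.prems obtain \<delta> where d: "\<delta> > 0"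
      "\<forall>z. \<bar>z - v\<bar> < \<delta> \<longrightarrow> \<bar>(T_beta \<beta> ^^ n) z - q\<bar> < e'" unfolding q_def by auto
    show "\<exists>\<delta>>0. \<forall>z. \<bar>z - v\<bar> < \<delta> \<longrightarrow> \<bar>(T_beta \<beta> ^^ Suc n) z - (qS \<beta> ^^ Suc n) v\<bar> < e"
    proof (intro exI conjI allI impI)
      show "0 < \<delta>" by fact
      fix z assume "\<bar>z - v\<bar> < \<delta>"
      then have h: "\<bar>(T_beta \<beta> ^^ n) z - q\<bar> < e'" using d by auto
      then have "\<bar>(T_beta \<beta> ^^ n) z - q\<bar> < g / \<beta>" unfolding e'_def by simp
      from loc[OF this] have "\<bar>(T_beta \<beta> ^^ Suc n) z - (qS \<beta> ^^ Suc n) v\<bar> = \<beta> * \<bar>(T_beta \<beta> ^^ n) z - q\<bar>"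
        unfolding q_def by simp
      also have "\<dots> < \<beta> * (e / \<beta>)" using h assms(1) unfolding e'_def by (intro mult_strict_left_mono) auto
      also have "\<dots> = e" using assms(1) by simp
      finally show "\<bar>(T_beta \<beta> ^^ Suc n) z - (qS \<beta> ^^ Suc n) v\<bar> < e" .
    qed
  qed
qed

lemma bif_extract:
  assumes "bifurcation \<beta> v" "0 < v" "v < 1" "0 < \<delta>"
  shows "\<exists>z s. \<bar>z - v\<bar> < \<delta> \<and> v - \<delta> < s \<and> (\<forall>k. (T_beta \<beta> ^^ k) z \<notin> {0<..<s})"
proof -
  define d where "d = min \<delta> (min v (1 - v))"
  have d0: "0 < d" unfolding d_def using assms by simp
  have "\<forall>\<delta>>0. \<exists>t'\<in>{0..1}. \<bar>t' - v\<bar> < \<delta> \<and> K_set \<beta> t' \<noteq> K_set \<beta> v"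
    using assms(1-3) unfolding bifurcation_def by auto
  then obtain t' where t': "t' \<in> {0..1}" "\<bar>t' - v\<bar> < d" "K_set \<beta> t' \<noteq> K_set \<beta> v" using d0 by blast
  have t'01: "0 < t'" "t' < 1" using t'(2) unfolding d_def by auto
  have Kt': "K_set \<beta> t' = {x \<in> {0..<1}. \<forall>k. (T_beta \<beta> ^^ k) x \<notin> {0<..<t'}}"
    using t'01 unfolding K_set_def by auto
  have Kv: "K_set \<beta> v = {x \<in> {0..<1}. \<forall>k. (T_beta \<beta> ^^ k) x \<notin> {0<..<v}}"
    using assms unfolding K_set_def by auto
  obtain x where x: "(x \<in> K_set \<beta> t') \<noteq> (x \<in> K_set \<beta> v)" using t'(3) by blast
  have shift: "(T_beta \<beta> ^^ k) ((T_beta \<beta> ^^ n) x) = (T_beta \<beta> ^^ (k + n)) x" for k n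
    by (simp add: funpow_add)
  consider "t' < v" | "v < t'" | "t' = v" by linarith
  then show ?thesis
  proof cases
    case 1
    have "K_set \<beta> v \<subseteq> K_set \<beta> t'" unfolding Kt' Kv using 1 by auto
    then have "x \<in> K_set \<beta> t'" "x \<notin> K_set \<beta> v" using x by auto
    then obtain n where n: "(T_beta \<beta> ^^ n) x \<in> {0<..<v}" "\<forall>k. (T_beta \<beta> ^^ k) x \<notin> {0<..<t'}"
      unfolding Kt' Kv by auto
    show ?thesis
    proof (intro exI conjI)
      show "\<bar>(T_beta \<beta> ^^ n) x - v\<bar> < \<delta>" using n 1 t'(2) unfolding d_def by force
      show "v - \<delta> < t'" using t'(2) unfolding d_def by auto
      show "\<forall>k. (T_beta \<beta> ^^ k) ((T_beta \<beta> ^^ n) x) \<notin> {0<..<t'}" using n(2) shift by simp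
    qed
  next
    case 2
    have "K_set \<beta> t' \<subseteq> K_set \<beta> v" unfolding Kt' Kv using 2 by auto
    then have "x \<notin> K_set \<beta> t'" "x \<in> K_set \<beta> v" using x by auto
    then obtain n where n: "(T_beta \<beta> ^^ n) x \<in> {0<..<t'}" "\<forall>k. (T_beta \<beta> ^^ k) x \<notin> {0<..<v}"
      unfolding Kt' Kv by auto
    show ?thesis
    proof (intro exI conjI)
      show "\<bar>(T_beta \<beta> ^^ n) x - v\<bar> < \<delta>" using n 2 t'(2) unfolding d_def by force
      show "v - \<delta> < v" using assms by auto
      show "\<forall>k. (T_beta \<beta> ^^ k) ((T_beta \<beta> ^^ n) x) \<notin> {0<..<v}" using n(2) shift by simp
    qed
  next
    case 3 then show ?thesis using t'(3) by simp
  qed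
qed

lemma lemA:
  assumes "1 < \<beta>" "bifurcation \<beta> v" "0 < v" "v < 1" "(qS \<beta> ^^ n) v < v"
  shows "\<exists>i<n. \<beta> * (qS \<beta> ^^ i) v \<in> \<int>"
proof (rule ccontr)
  assume "\<not> ?thesis"
  then have nz: "\<forall>i<n. \<beta> * (qS \<beta> ^^ i) v \<notin> \<int>" by auto
  define \<epsilon> where "\<epsilon> = (qS \<beta> ^^ n) v"
  have \<epsilon>0: "0 < \<epsilon>" unfolding \<epsilon>_def using qS_iter_pos assms(3) by blast
  define e where "e = min \<epsilon> (v - \<epsilon>) / 2"
  have e0: "0 < e" unfolding e_def using \<epsilon>0 assms(5) \<epsilon>_def by simp
  obtain \<delta>0 where d0: "\<delta>0 > 0" "\<forall>z. \<bar>z - v\<bar> < \<delta>0 \<longrightarrow> \<bar>(T_beta \<beta> ^^ n) z - \<epsilon>\<bar> < e"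
    using T_approx[of \<beta> n v] nz assms(1) e0 unfolding \<epsilon>_def by auto
  define \<delta> where "\<delta> = min \<delta>0 e"
  have "0 < \<delta>" unfolding \<delta>_def using d0 e0 by simp
  from bif_extract[OF assms(2,3,4) this] obtain z s where zs: "\<bar>z - v\<bar> < \<delta>" "v - \<delta> < s"
    "\<forall>k. (T_beta \<beta> ^^ k) z \<notin> {0<..<s}" by blast
  have "\<bar>(T_beta \<beta> ^^ n) z - \<epsilon>\<bar> < e" using d0 zs(1) unfolding \<delta>_def by auto
  moreover have "e \<le> \<epsilon> / 2" "e \<le> (v - \<epsilon>) / 2" unfolding e_def by auto
  moreover have "\<delta> \<le> e" unfolding \<delta>_def by simp
  ultimately have "(T_beta \<beta> ^^ n) z \<in> {0<..<s}" using zs(2) \<epsilon>0 by auto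
  then show False using zs(3) by blast
qed


definition cst :: "real \<Rightarrow> real \<Rightarrow> real" where
  "cst \<beta> t0 = (let a = (\<lambda>i. (qS \<beta> ^^ i) 1);
      M = (if \<exists>i. a i < t0 then LEAST i. a i < t0 else 0) in min t0 (Min (a ` {..M})))"

lemma qS_int: assumes "\<beta> * y \<in> \<int>" shows "qS \<beta> y = 1"
proof -
  obtain m where "\<beta> * y = of_int m" using assms by (auto elim: Ints_cases)
  then show ?thesis unfolding qS_def by simp
qed

lemma cst_pos: assumes "0 < t0" shows "0 < cst \<beta> t0"
proof -
  define a where "a = (\<lambda>i. (qS \<beta> ^^ i) (1::real))"
  define M where "M = (if \<exists>i. a i < t0 then LEAST i. a i < t0 else 0)"
  have "0 < Min (a ` {..M})" using qS_iter_pos[of 1] by (subst Min_gr_iff) (auto simp: a_def)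
  then show ?thesis unfolding cst_def Let_def a_def[symmetric] M_def[symmetric] using assms by simp
qed

lemma core:
  assumes b: "1 < \<beta>" and t0: "0 < t0" and tu: "t0 \<le> t" "t < u" "u < 1"
    and bt: "bifurcation \<beta> t" and bu: "bifurcation \<beta> u"
    and k: "\<forall>j<k. qd \<beta> ((qS \<beta> ^^ j) t) = qd \<beta> ((qS \<beta> ^^ j) u)"
      "qd \<beta> ((qS \<beta> ^^ k) t) \<noteq> qd \<beta> ((qS \<beta> ^^ k) u)"
  shows "cst \<beta> t0 / \<beta> / \<beta>^k \<le> u - t \<and> u - t \<le> 1 / \<beta>^k"
proof -
  have b0: "0 < \<beta>" using b by simp
  have t00: "0 < t" "0 < u" using t0 tu by auto
  have F1: "(qS \<beta> ^^ i) u - (qS \<beta> ^^ i) t = \<beta>^i * (u - t)" if "i \<le> k" for i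
    using diff_id[OF b0 t00] k(1) that by auto
  have Fl: "(qS \<beta> ^^ i) t < (qS \<beta> ^^ i) u" if "i \<le> k" for i
  proof -
    have "0 < \<beta>^i * (u - t)" using tu b0 by simp
    then show ?thesis using F1[OF that] by simp
  qed
  have le1: "(qS \<beta> ^^ i) u \<le> 1" "(qS \<beta> ^^ i) t \<le> 1" for i using qS_iter_le1 tu by auto
  have pos: "0 < (qS \<beta> ^^ i) u" "0 < (qS \<beta> ^^ i) t" for i using qS_iter_pos t00 by auto
  have upper: "u - t \<le> 1 / \<beta>^k"
  proof -
    have "\<beta>^k * (u - t) \<le> 1" using F1[of k] le1[of k] pos[of k] by simp
    then show ?thesis using b0 by (simp add: field_simps)
  qed
  define du where "du = qd \<beta> ((qS \<beta> ^^ k) u)"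
  define dt where "dt = qd \<beta> ((qS \<beta> ^^ k) t)"
  have su: "(qS \<beta> ^^ Suc k) u = \<beta> * (qS \<beta> ^^ k) u - real du" unfolding du_def by (rule qS_Suc[OF b0 t00(2)])
  have st: "(qS \<beta> ^^ Suc k) t = \<beta> * (qS \<beta> ^^ k) t - real dt" unfolding dt_def by (rule qS_Suc[OF b0 t00(1)])
  have "0 < \<beta> * ((qS \<beta> ^^ k) u - (qS \<beta> ^^ k) t)" using Fl[of k] b0 by simp
  then have "0 < real du - real dt + (qS \<beta> ^^ Suc k) u - (qS \<beta> ^^ Suc k) t"
    using su st by (simp add: algebra_simps)
  then have "real dt < real du + 1" using le1[of "Suc k"] pos[of "Suc k"] by linarith
  then have "dt \<le> du" by linarith
  then have dd: "dt + 1 \<le> du" using k(2) unfolding du_def dt_def by linarith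
  have F2: "(qS \<beta> ^^ Suc k) u \<le> \<beta>^(Suc k) * (u - t)"
  proof -
    have "\<beta>^(Suc k) * (u - t) = \<beta> * ((qS \<beta> ^^ k) u - (qS \<beta> ^^ k) t)" using F1[of k] by simp
    also have "\<dots> = real du - real dt + (qS \<beta> ^^ Suc k) u - (qS \<beta> ^^ Suc k) t"
      using su st by (simp add: algebra_simps)
    finally show ?thesis using dd le1[of "Suc k"] by linarith
  qed
  define a where "a = (\<lambda>i. (qS \<beta> ^^ i) (1::real))"
  define M where "M = (if \<exists>i. a i < t0 then LEAST i. a i < t0 else 0)"
  have cdef: "cst \<beta> t0 = min t0 (Min (a ` {..M}))"
    unfolding cst_def Let_def a_def[symmetric] M_def[symmetric] by simp
  have key: "cst \<beta> t0 \<le> (qS \<beta> ^^ Suc k) u"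
  proof (cases "u \<le> (qS \<beta> ^^ Suc k) u")
    case True then show ?thesis using cdef tu by linarith
  next
    case False
    then obtain i where i: "i < Suc k" "\<beta> * (qS \<beta> ^^ i) u \<in> \<int>"
      using lemA[OF b bu t00(2) tu(3), of "Suc k"] by (meson not_le)
    define j where "j = Suc i"
    have j1: "(qS \<beta> ^^ j) u = 1" unfolding j_def using qS_int[OF i(2)] by simp
    define r where "r = Suc k - j"
    have "(qS \<beta> ^^ Suc k) u = (qS \<beta> ^^ (r + j)) u" unfolding r_def using i(1) j_def by simp
    also have "\<dots> = a r" unfolding a_def funpow_add using j1 by simp
    finally have ur: "(qS \<beta> ^^ Suc k) u = a r" .
    show ?thesis
    proof (cases "r \<le> M")
      case True
      then have "Min (a ` {..M}) \<le> a r" by (intro Min_le) auto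
      then show ?thesis using cdef ur by linarith
    next
      case rM: False
      show ?thesis
      proof (cases "\<exists>i. a i < t0")
        case False
        then have "t0 \<le> a r" by (meson not_le)
        then show ?thesis using cdef ur by linarith
      next
        case True
        then have aM: "a M < t0" unfolding M_def by (simp add: LeastI_ex[where P="\<lambda>i. a i < t0"])
        have jM: "j + M \<le> k" using rM i(1) unfolding r_def j_def by linarith
        have "(qS \<beta> ^^ (M + j)) u = a M" unfolding a_def funpow_add using j1 by simp
        then have "(qS \<beta> ^^ (j + M)) t < t" using Fl[OF jM] aM tu by (simp add: add.commute)
        then obtain i' where i': "i' < j + M" "\<beta> * (qS \<beta> ^^ i') t \<in> \<int>"
          using lemA[OF b bt t00(1), of "j + M"] tu by (meson less_trans)
        have "(qS \<beta> ^^ Suc i') t = 1" using qS_int[OF i'(2)] by simp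
        moreover have "Suc i' \<le> k" using i' jM by simp
        ultimately have "1 < (qS \<beta> ^^ Suc i') u" using Fl by fastforce
        then show ?thesis using le1 by (metis not_le)
      qed
    qed
  qed
  have "cst \<beta> t0 / \<beta> / \<beta>^k = cst \<beta> t0 / \<beta>^(Suc k)" by simp
  also have "\<dots> \<le> (qS \<beta> ^^ Suc k) u / \<beta>^(Suc k)" using key b0 by (simp add: divide_right_mono)
  also have "\<dots> \<le> u - t" using F2 b0 by (simp add: field_simps)
  finally show ?thesis using upper by simp
qed


lemma pair:
  assumes b: "1 < \<beta>" and t0: "0 < t0" and tu: "t0 \<le> t" "t < u" "u < 1"
    and bt: "bifurcation \<beta> t" and bu: "bifurcation \<beta> u"
  shows "\<exists>k. m_prefix \<beta> t u = enat k \<and> m_prefix \<beta> u t = enat k \<and>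
     cst \<beta> t0 / \<beta> / \<beta>^k \<le> u - t \<and> u - t \<le> 1 / \<beta>^k"
proof -
  have t00: "0 < t" "0 < u" "t \<le> 1" "u \<le> 1" using t0 tu by auto
  define A where "A = (\<lambda>i. qd \<beta> ((qS \<beta> ^^ i) t))"
  define B where "B = (\<lambda>i. qd \<beta> ((qS \<beta> ^^ i) u))"
  have qA: "quasi_greedy \<beta> t = A" unfolding A_def using qg_eq b t00 by auto
  have qB: "quasi_greedy \<beta> u = B" unfolding B_def using qg_eq b t00 by auto
  have "A \<noteq> B"
  proof
    assume "A = B"
    have "(\<lambda>i. real (A i) / \<beta> ^ (i + 1)) sums t" using qseq_exp[OF b t00(1,3)]
      unfolding A_def is_beta_exp_nez_def by blast
    moreover have "(\<lambda>i. real (B i) / \<beta> ^ (i + 1)) sums u" using qseq_exp[OF b t00(2,4)]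
      unfolding B_def is_beta_exp_nez_def by blast
    ultimately show False using \<open>A = B\<close> tu sums_unique2 by fastforce
  qed
  then have ex: "\<exists>i. A i \<noteq> B i" by auto
  define k where "k = (LEAST i. A i \<noteq> B i)"
  have kn: "A k \<noteq> B k" unfolding k_def using ex by (rule LeastI_ex)
  have kb: "\<forall>j<k. A j = B j" unfolding k_def using not_less_Least by blast
  have m1: "m_prefix \<beta> t u = enat k" using m_prefix_eq_fin[OF kb kn qA qB] .
  have m2: "m_prefix \<beta> u t = enat k" using m_prefix_eq_fin[of k B A, OF _ _ qB qA] kb kn by auto
  have "cst \<beta> t0 / \<beta> / \<beta>^k \<le> u - t \<and> u - t \<le> 1 / \<beta>^k"
    using core[OF b t0 tu bt bu, of k] kb kn unfolding A_def B_def by auto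
  then show ?thesis using m1 m2 by blast
qed

theorem mainTheorem8:
  fixes \<beta> t\<^sub>0 :: real
  assumes "\<beta> > 1" and "t\<^sub>0 > 0"
  shows "\<exists>C\<^sub>1>0. \<forall>t\<in>U_set \<beta> \<inter> {t\<^sub>0..1}. \<forall>u\<in>U_set \<beta> \<inter> {t\<^sub>0..1}.
           C\<^sub>1 * beta_pow_neg \<beta> (m_prefix \<beta> t u) \<le> \<bar>t - u\<bar> \<and>
           \<bar>t - u\<bar> \<le> beta_pow_neg \<beta> (m_prefix \<beta> t u)"
proof (intro exI conjI ballI)
  show "0 < cst \<beta> t\<^sub>0 / \<beta>" using cst_pos[OF assms(2)] assms(1) by simp
  fix t u assume t: "t \<in> U_set \<beta> \<inter> {t\<^sub>0..1}" and u: "u \<in> U_set \<beta> \<inter> {t\<^sub>0..1}"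
  have T: "t\<^sub>0 \<le> t" "t < 1" "bifurcation \<beta> t" using t unfolding U_set_def by auto
  have U: "t\<^sub>0 \<le> u" "u < 1" "bifurcation \<beta> u" using u unfolding U_set_def by auto
  have "cst \<beta> t\<^sub>0 / \<beta> * beta_pow_neg \<beta> (m_prefix \<beta> t u) \<le> \<bar>t - u\<bar> \<and>
           \<bar>t - u\<bar> \<le> beta_pow_neg \<beta> (m_prefix \<beta> t u)"
  proof (cases "t = u")
    case True then show ?thesis using m_prefix_eq_inf by (simp add: beta_pow_neg_def)
  next
    case False
    then consider "t < u" | "u < t" by linarith
    then show ?thesis
    proof cases
      case 1
      from pair[OF assms(1,2) T(1) 1 U(2) T(3) U(3)] obtain k where
        "m_prefix \<beta> t u = enat k" "cst \<beta> t\<^sub>0 / \<beta> / \<beta>^k \<le> u - t" "u - t \<le> 1 / \<beta>^k" by blast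
      then show ?thesis using 1 by (simp add: beta_pow_neg_def)
    next
      case 2
      from pair[OF assms(1,2) U(1) 2 T(2) U(3) T(3)] obtain k where
        "m_prefix \<beta> t u = enat k" "cst \<beta> t\<^sub>0 / \<beta> / \<beta>^k \<le> t - u" "t - u \<le> 1 / \<beta>^k" by blast
      then show ?thesis using 2 by (simp add: beta_pow_neg_def)
    qed
  qed
  then show "cst \<beta> t\<^sub>0 / \<beta> * beta_pow_neg \<beta> (m_prefix \<beta> t u) \<le> \<bar>t - u\<bar>"
    "\<bar>t - u\<bar> \<le> beta_pow_neg \<beta> (m_prefix \<beta> t u)" by auto
qed

end
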